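(* For every finite multiset $\Gamma$ and formulas $\varphi,\psi,\delta,\chi$: if $\Gamma,(\varphi\to\psi)\to\delta\Rightarrow\chi$ is provable in $\mathsf{G4iSLt}$, then $\Gamma,\varphi,\psi\to\delta,\psi\to\delta\Rightarrow\chi$ is provable in $\mathsf{G4iSLt}$.
   Context: Formulas are built by the grammar $\varphi ::= p \mid \bot \mid \varphi\land\varphi \mid \varphi\lor\varphi \mid \varphi\to\varphi \mid \Box\varphi$, with $p$ ranging over a countably infinite set of propositional variables. For a multiset $\Gamma$, $\Box\Gamma=\{\Box\psi:\psi\in\Gamma\}$; a boxed formula is one of the form $\Box\psi$. A sequent is $\Gamma\Rightarrow\chi$ with $\Gamma$ a finite multiset of formulas and $\chi$ a formula. The sequent calculus $\mathsf{G4iSLt}$ has the following rules, where $p$ is a propositional variable and $\Phi$ always denotes a multiset containing no boxed formula: (⊥L) $\bot,\Gamma\Rightarrow\chi$ (no premise); (IdP) $\Gamma,p\Rightarrow p$ (no premise); (∧L) from $\Gamma,\varphi,\psi\Rightarrow\chi$ infer $\Gamma,\varphi\land\psi\Rightarrow\chi$; (∧R) from $\Gamma\Rightarrow\varphi$ and $\Gamma\Rightarrow\psi$ infer $\Gamma\Rightarrow\varphi\land\psi$; (∨L) from $\Gamma,\varphi\Rightarrow\chi$ and $\Gamma,\psi\Rightarrow\chi$ infer $\Gamma,\varphi\lor\psi\Rightarrow\chi$; (∨R$_i$), $i\in\{1,2\}$: from $\Gamma\Rightarrow\varphi_i$ infer $\Gamma\Rightarrow\varphi_1\lor\varphi_2$;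 (p→L) from $\Gamma,p,\varphi\Rightarrow\chi$ infer $\Gamma,p,p\to\varphi\Rightarrow\chi$; (→R) from $\Gamma,\varphi\Rightarrow\psi$ infer $\Gamma\Rightarrow\varphi\to\psi$; (□→L) from $\Phi,\Gamma,\psi,\Box\varphi\Rightarrow\varphi$ and $\Phi,\Box\Gamma,\psi\Rightarrow\chi$ infer $\Phi,\Box\Gamma,\Box\varphi\to\psi\Rightarrow\chi$; (SLtR) from $\Phi,\Gamma,\Box\varphi\Rightarrow\varphi$ infer $\Phi,\Box\Gamma\Rightarrow\Box\varphi$; (∧→L) from $\Gamma,\varphi\to(\psi\to\chi)\Rightarrow\delta$ infer $\Gamma,(\varphi\land\psi)\to\chi\Rightarrow\delta$; (∨→L) from $\Gamma,\varphi\to\chi,\psi\to\chi\Rightarrow\delta$ infer $\Gamma,(\varphi\lor\psi)\to\chi\Rightarrow\delta$; (→→L) from $\Gamma,\psi\to\chi\Rightarrow\varphi\to\psi$ and $\Gamma,\chi\Rightarrow\delta$ infer $\Gamma,(\varphi\to\psi)\to\chi\Rightarrow\delta$. A proof of a sequent $S$ is a finite tree of sequents with root $S$ in which each interior node together with its children forms an instance of a rule (conclusion, premises) and each leaf is the conclusion of a premise-free rule; $S$ is provable if it has a proof. *)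

theory Defs
  imports Main "HOL-Library.Multiset"
begin

datatype form =
    Var nat
  | Bot
  | And form form
  | Or form form
  | Imp form form
  | Box form

definition is_boxed :: "form \<Rightarrow> bool" where
  "is_boxed f \<longleftrightarrow> (\<exists>g. f = Box g)"

definition box_free :: "form multiset \<Rightarrow> bool" where
  "box_free \<Phi> \<longleftrightarrow> (\<forall>f \<in># \<Phi>. \<not> is_boxed f)"

abbreviation boxms :: "form multiset \<Rightarrow> form multiset" where
  "boxms \<Gamma> \<equiv> image_mset Box \<Gamma>"

inductive G4iSLt :: "form multiset \<Rightarrow> form \<Rightarrow> bool" where
  BotL: "G4iSLt (add_mset Bot \<Gamma>) \<chi>"
| IdP: "G4iSLt (add_mset (Var p) \<Gamma>) (Var p)"
| AndL: "G4iSLt (add_mset \<phi> (add_mset \<psi> \<Gamma>)) \<chi> \<Longrightarrow>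
         G4iSLt (add_mset (And \<phi> \<psi>) \<Gamma>) \<chi>"
| AndR: "G4iSLt \<Gamma> \<phi> \<Longrightarrow> G4iSLt \<Gamma> \<psi> \<Longrightarrow> G4iSLt \<Gamma> (And \<phi> \<psi>)"
| OrL: "G4iSLt (add_mset \<phi> \<Gamma>) \<chi> \<Longrightarrow> G4iSLt (add_mset \<psi> \<Gamma>) \<chi> \<Longrightarrow>
        G4iSLt (add_mset (Or \<phi> \<psi>) \<Gamma>) \<chi>"
| OrR1: "G4iSLt \<Gamma> \<phi> \<Longrightarrow> G4iSLt \<Gamma> (Or \<phi> \<psi>)"
| OrR2: "G4iSLt \<Gamma> \<psi> \<Longrightarrow> G4iSLt \<Gamma> (Or \<phi> \<psi>)"
| PImpL: "G4iSLt (add_mset (Var p) (add_mset \<phi> \<Gamma>)) \<chi> \<Longrightarrow>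
          G4iSLt (add_mset (Var p) (add_mset (Imp (Var p) \<phi>) \<Gamma>)) \<chi>"
| ImpR: "G4iSLt (add_mset \<phi> \<Gamma>) \<psi> \<Longrightarrow> G4iSLt \<Gamma> (Imp \<phi> \<psi>)"
| BoxImpL: "box_free \<Phi> \<Longrightarrow>
    G4iSLt (\<Phi> + \<Gamma> + {#\<psi>, Box \<phi>#}) \<phi> \<Longrightarrow>
    G4iSLt (\<Phi> + boxms \<Gamma> + {#\<psi>#}) \<chi> \<Longrightarrow>
    G4iSLt (\<Phi> + boxms \<Gamma> + {#Imp (Box \<phi>) \<psi>#}) \<chi>"
| SLtR: "box_free \<Phi> \<Longrightarrow>
    G4iSLt (\<Phi> + \<Gamma> + {#Box \<phi>#}) \<phi> \<Longrightarrow>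
    G4iSLt (\<Phi> + boxms \<Gamma>) (Box \<phi>)"
| AndImpL: "G4iSLt (add_mset (Imp \<phi> (Imp \<psi> \<chi>)) \<Gamma>) \<delta> \<Longrightarrow>
            G4iSLt (add_mset (Imp (And \<phi> \<psi>) \<chi>) \<Gamma>) \<delta>"
| OrImpL: "G4iSLt (add_mset (Imp \<phi> \<chi>) (add_mset (Imp \<psi> \<chi>) \<Gamma>)) \<delta> \<Longrightarrow>
           G4iSLt (add_mset (Imp (Or \<phi> \<psi>) \<chi>) \<Gamma>) \<delta>"
| ImpImpL: "G4iSLt (add_mset (Imp \<psi> \<chi>) \<Gamma>) (Imp \<phi> \<psi>) \<Longrightarrow>
            G4iSLt (add_mset \<chi> \<Gamma>) \<delta> \<Longrightarrow>
            G4iSLt (add_mset (Imp (Imp \<phi> \<psi>) \<chi>) \<Gamma>) \<delta>"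

end

theory Submission
  imports Defs
begin

lemma split_ne: "add_mset P G = add_mset x T \<Longrightarrow> P \<noteq> x \<Longrightarrow> \<exists>K. G = add_mset x K \<and> T = add_mset P K"
  by (auto simp: add_eq_conv_ex)

lemma box_ctx_cases:
  assumes "\<Phi> + boxms G + R = add_mset x T"
  shows "(\<exists>\<Phi>'. \<Phi> = add_mset x \<Phi>' \<and> T = \<Phi>' + boxms G + R) \<or>
         (\<exists>a G'. x = Box a \<and> G = add_mset a G' \<and> T = \<Phi> + boxms G' + R) \<or>
         (\<exists>R'. R = add_mset x R' \<and> T = \<Phi> + boxms G + R')"
proof -
  have T: "T = \<Phi> + boxms G + R - {#x#}" using assms by (metis add_mset_remove_trivial)
  have "x \<in># \<Phi> + boxms G + R" using assms by (metis union_single_eq_member add_mset_add_single)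
  then consider "x \<in># \<Phi>" | "x \<in># boxms G" | "x \<in># R" by auto
  then show ?thesis
  proof cases
    case 1 then obtain \<Phi>' where "\<Phi> = add_mset x \<Phi>'" by (metis insert_DiffM)
    then show ?thesis using T by auto
  next
    case 2 then obtain a where a: "a \<in># G" "x = Box a" by auto
    then obtain G' where "G = add_mset a G'" by (metis insert_DiffM)
    then show ?thesis using T a by auto
  next
    case 3 then obtain R' where "R = add_mset x R'" by (metis insert_DiffM)
    then show ?thesis using T by auto
  qed
qed

lemma box_free_add: "box_free (add_mset x \<Phi>) \<longleftrightarrow> \<not> is_boxed x \<and> box_free \<Phi>"
  by (auto simp: box_free_def)

lemma box_free_not_box: "box_free \<Phi> \<Longrightarrow> \<Phi> \<noteq> add_mset (Box a) \<Phi>'"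
  by (auto simp: box_free_def is_boxed_def)

fun unbox :: "form \<Rightarrow> form" where
  "unbox (Box f) = f" | "unbox f = f"

lemma split_boxes:
  "\<Phi> = filter_mset (\<lambda>f. \<not> is_boxed f) \<Phi> + boxms (image_mset unbox (filter_mset is_boxed \<Phi>))"
proof -
  have "boxms (image_mset unbox (filter_mset is_boxed \<Phi>)) = filter_mset is_boxed \<Phi>"
    by (induction \<Phi>) (auto simp: is_boxed_def)
  then show ?thesis by (metis multiset_partition add.commute)
qed

lemma box_free_filter: "box_free (filter_mset (\<lambda>f. \<not> is_boxed f) \<Phi>)"
  by (simp add: box_free_def)

lemma eq_ctx: "G4iSLt A c \<Longrightarrow> A = B \<Longrightarrow> G4iSLt B c" by (simp add: add_mset_commute)

lemma unbox_lemma: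
  assumes "G4iSLt S c"
  shows "S = add_mset (Box a) T \<Longrightarrow> G4iSLt (add_mset a T) c"
  using assms
proof (induction arbitrary: a T rule: G4iSLt.induct)
  case (BotL \<Gamma> \<chi>)
  then obtain K where "T = add_mset Bot K" using split_ne[of Bot \<Gamma> "Box a" T] by auto
  then show ?case by (simp add: add_mset_commute G4iSLt.BotL)
next
  case (IdP p \<Gamma>)
  then obtain K where "T = add_mset (Var p) K" using split_ne[of "Var p" \<Gamma> "Box a" T] by auto
  then show ?case by (metis G4iSLt.IdP add_mset_commute)
next
  case (AndL \<phi> \<psi> \<Gamma> \<chi>)
  then obtain K where K: "\<Gamma> = add_mset (Box a) K" "T = add_mset (And \<phi> \<psi>) K"
    using split_ne[of "And \<phi> \<psi>" \<Gamma> "Box a" T] by auto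
  have "G4iSLt (add_mset a (add_mset \<phi> (add_mset \<psi> K))) \<chi>"
    using AndL.IH[of a "add_mset \<phi> (add_mset \<psi> K)"] K by (simp add: add_mset_commute)
  then have "G4iSLt (add_mset \<phi> (add_mset \<psi> (add_mset a K))) \<chi>" by (simp add: add_mset_commute)
  then show ?case by (rule eq_ctx[OF G4iSLt.AndL]) (simp add: K add_mset_commute)
next
  case (AndR \<Gamma> \<phi> \<psi>)
  then show ?case by (simp add: G4iSLt.AndR)
next
  case (OrL \<phi> \<Gamma> \<chi> \<psi>)
  then obtain K where K: "\<Gamma> = add_mset (Box a) K" "T = add_mset (Or \<phi> \<psi>) K"
    using split_ne[of "Or \<phi> \<psi>" \<Gamma> "Box a" T] by auto
  have "G4iSLt (add_mset \<phi> (add_mset a K)) \<chi>"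
    using OrL.IH(1)[of a "add_mset \<phi> K"] K by (simp add: add_mset_commute)
  moreover have "G4iSLt (add_mset \<psi> (add_mset a K)) \<chi>"
    using OrL.IH(2)[of a "add_mset \<psi> K"] K by (simp add: add_mset_commute)
  ultimately show ?case by (rule eq_ctx[OF G4iSLt.OrL]) (simp add: K add_mset_commute)
next
  case (OrR1 \<Gamma> \<phi> \<psi>)
  then show ?case by (simp add: G4iSLt.OrR1)
next
  case (OrR2 \<Gamma> \<psi> \<phi>)
  then show ?case by (simp add: G4iSLt.OrR2)
next
  case (PImpL p \<phi> \<Gamma> \<chi>)
  then obtain K where K: "\<Gamma> = add_mset (Box a) K" "T = add_mset (Var p) (add_mset (Imp (Var p) \<phi>) K)"
    by (auto simp: add_eq_conv_ex)
  have "G4iSLt (add_mset a (add_mset (Var p) (add_mset \<phi> K))) \<chi>"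
    using PImpL.IH[of a "add_mset (Var p) (add_mset \<phi> K)"] K by (simp add: add_mset_commute)
  then have "G4iSLt (add_mset (Var p) (add_mset \<phi> (add_mset a K))) \<chi>" by (simp add: add_mset_commute)
  then show ?case by (rule eq_ctx[OF G4iSLt.PImpL]) (simp add: K add_mset_commute)
next
  case (ImpR \<phi> \<Gamma> \<psi>)
  have "G4iSLt (add_mset a (add_mset \<phi> T)) \<psi>"
    using ImpR.IH[of a "add_mset \<phi> T"] ImpR.prems by (simp add: add_mset_commute)
  then show ?case by (simp add: add_mset_commute G4iSLt.ImpR)
next
  case (BoxImpL \<Phi> \<Gamma> \<psi> \<phi> \<chi>)
  from box_ctx_cases[OF BoxImpL.prems] BoxImpL.hyps(1)
  obtain G' where G': "\<Gamma> = add_mset a G'" "T = \<Phi> + boxms G' + {#Imp (Box \<phi>) \<psi>#}"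
    by (auto simp: box_free_def is_boxed_def)
  have p2: "G4iSLt (add_mset a (\<Phi> + boxms G' + {#\<psi>#})) \<chi>"
    using BoxImpL.IH(2)[of a "\<Phi> + boxms G' + {#\<psi>#}"] G' by (simp add: add_mset_commute)
  show ?case
  proof (cases "is_boxed a")
    case False
    have "G4iSLt (add_mset a \<Phi> + boxms G' + {#Imp (Box \<phi>) \<psi>#}) \<chi>"
      apply (rule G4iSLt.BoxImpL)
      using False BoxImpL.hyps(1) apply (simp add: box_free_add)
      using BoxImpL.hyps(2) G' apply (simp add: add_mset_commute)
      using p2 by (simp add: add_mset_commute)
    then show ?thesis using G' by (simp add: add_mset_commute)
  next
    case True
    then obtain b where b: "a = Box b" by (auto simp: is_boxed_def)
    have p1: "G4iSLt (add_mset b (\<Phi> + G' + {#\<psi>, Box \<phi>#})) \<phi>"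
      using BoxImpL.IH(1)[of b "\<Phi> + G' + {#\<psi>, Box \<phi>#}"] G' b by (simp add: add_mset_commute)
    have "G4iSLt (\<Phi> + boxms (add_mset b G') + {#Imp (Box \<phi>) \<psi>#}) \<chi>"
      apply (rule G4iSLt.BoxImpL)
      using BoxImpL.hyps(1) apply (simp add: add_mset_commute)
      using p1 apply (simp add: add_mset_commute)
      using p2 b by (simp add: add_mset_commute)
    then show ?thesis using G' b by (simp add: add_mset_commute)
  qed
next
  case (SLtR \<Phi> \<Gamma> \<phi>)
  from box_ctx_cases[of \<Phi> \<Gamma> "{#}" "Box a" T] SLtR.prems SLtR.hyps(1)
  obtain G' where G': "\<Gamma> = add_mset a G'" "T = \<Phi> + boxms G'"
    by (auto simp: box_free_def is_boxed_def)
  show ?case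
  proof (cases "is_boxed a")
    case False
    have "G4iSLt (add_mset a \<Phi> + boxms G') (Box \<phi>)"
      apply (rule G4iSLt.SLtR)
      using False SLtR.hyps(1) apply (simp add: box_free_add)
      using SLtR.hyps(2) G' by (simp add: add_mset_commute)
    then show ?thesis using G' by (simp add: add_mset_commute)
  next
    case True
    then obtain b where b: "a = Box b" by (auto simp: is_boxed_def)
    have p1: "G4iSLt (add_mset b (\<Phi> + G' + {#Box \<phi>#})) \<phi>"
      using SLtR.IH[of b "\<Phi> + G' + {#Box \<phi>#}"] G' b by (simp add: add_mset_commute)
    have "G4iSLt (\<Phi> + boxms (add_mset b G')) (Box \<phi>)"
      apply (rule G4iSLt.SLtR)
      using SLtR.hyps(1) apply (simp add: add_mset_commute)
      using p1 by (simp add: add_mset_commute)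
    then show ?thesis using G' b by (simp add: add_mset_commute)
  qed
next
  case (AndImpL \<phi> \<psi> \<chi> \<Gamma> \<delta>)
  then obtain K where K: "\<Gamma> = add_mset (Box a) K" "T = add_mset (Imp (And \<phi> \<psi>) \<chi>) K"
    using split_ne[of "Imp (And \<phi> \<psi>) \<chi>" \<Gamma> "Box a" T] by auto
  have "G4iSLt (add_mset a (add_mset (Imp \<phi> (Imp \<psi> \<chi>)) K)) \<delta>"
    using AndImpL.IH[of a "add_mset (Imp \<phi> (Imp \<psi> \<chi>)) K"] K by (simp add: add_mset_commute)
  then have "G4iSLt (add_mset (Imp \<phi> (Imp \<psi> \<chi>)) (add_mset a K)) \<delta>" by (simp add: add_mset_commute)
  then show ?case by (rule eq_ctx[OF G4iSLt.AndImpL]) (simp add: K add_mset_commute)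
next
  case (OrImpL \<phi> \<chi> \<psi> \<Gamma> \<delta>)
  then obtain K where K: "\<Gamma> = add_mset (Box a) K" "T = add_mset (Imp (Or \<phi> \<psi>) \<chi>) K"
    using split_ne[of "Imp (Or \<phi> \<psi>) \<chi>" \<Gamma> "Box a" T] by auto
  have "G4iSLt (add_mset a (add_mset (Imp \<phi> \<chi>) (add_mset (Imp \<psi> \<chi>) K))) \<delta>"
    using OrImpL.IH[of a "add_mset (Imp \<phi> \<chi>) (add_mset (Imp \<psi> \<chi>) K)"] K by (simp add: add_mset_commute)
  then have "G4iSLt (add_mset (Imp \<phi> \<chi>) (add_mset (Imp \<psi> \<chi>) (add_mset a K))) \<delta>" by (simp add: add_mset_commute)
  then show ?case by (rule eq_ctx[OF G4iSLt.OrImpL]) (simp add: K add_mset_commute)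
next
  case (ImpImpL \<psi> \<chi> \<Gamma> \<phi> \<delta>)
  then obtain K where K: "\<Gamma> = add_mset (Box a) K" "T = add_mset (Imp (Imp \<phi> \<psi>) \<chi>) K"
    using split_ne[of "Imp (Imp \<phi> \<psi>) \<chi>" \<Gamma> "Box a" T] by auto
  have "G4iSLt (add_mset (Imp \<psi> \<chi>) (add_mset a K)) (Imp \<phi> \<psi>)"
    using ImpImpL.IH(1)[of a "add_mset (Imp \<psi> \<chi>) K"] K by (simp add: add_mset_commute)
  moreover have "G4iSLt (add_mset \<chi> (add_mset a K)) \<delta>"
    using ImpImpL.IH(2)[of a "add_mset \<chi> K"] K by (simp add: add_mset_commute)
  ultimately show ?case by (rule eq_ctx[OF G4iSLt.ImpImpL]) (simp add: K add_mset_commute)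
qed

lemma unbox_ms: "G4iSLt (S + boxms \<Theta>) c \<Longrightarrow> G4iSLt (S + \<Theta>) c"
proof (induction \<Theta> arbitrary: S)
  case empty then show ?case by simp
next
  case (add a \<Theta>)
  have "G4iSLt (add_mset a (S + boxms \<Theta>)) c"
    using unbox_lemma[OF add.prems, of a "S + boxms \<Theta>"] by simp
  then have "G4iSLt (add_mset a S + \<Theta>) c" using add.IH[of "add_mset a S"] by simp
  then show ?case by simp
qed

lemma BoxImpL':
  assumes "G4iSLt (\<Phi> + \<Gamma> + {#\<psi>, Box \<phi>#}) \<phi>" "G4iSLt (\<Phi> + boxms \<Gamma> + {#\<psi>#}) \<chi>"
  shows "G4iSLt (\<Phi> + boxms \<Gamma> + {#Imp (Box \<phi>) \<psi>#}) \<chi>"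
proof -
  define N where "N = filter_mset (\<lambda>f. \<not> is_boxed f) \<Phi>"
  define \<Theta> where "\<Theta> = image_mset unbox (filter_mset is_boxed \<Phi>)"
  have P: "\<Phi> = N + boxms \<Theta>" unfolding N_def \<Theta>_def by (rule split_boxes)
  have "G4iSLt ((N + \<Gamma> + {#\<psi>, Box \<phi>#}) + boxms \<Theta>) \<phi>" using assms(1) P by (simp add: ac_simps)
  then have p1: "G4iSLt (N + (\<Gamma> + \<Theta>) + {#\<psi>, Box \<phi>#}) \<phi>"
    by (rule eq_ctx[OF unbox_ms]) (simp add: ac_simps)
  have "G4iSLt (N + boxms (\<Gamma> + \<Theta>) + {#Imp (Box \<phi>) \<psi>#}) \<chi>"
    apply (rule G4iSLt.BoxImpL)
    apply (simp add: N_def box_free_filter)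
    apply (rule p1)
    using assms(2) P by (simp add: ac_simps)
  then show ?thesis using P by (simp add: ac_simps)
qed

lemma SLtR':
  assumes "G4iSLt (\<Phi> + \<Gamma> + {#Box \<phi>#}) \<phi>"
  shows "G4iSLt (\<Phi> + boxms \<Gamma>) (Box \<phi>)"
proof -
  define N where "N = filter_mset (\<lambda>f. \<not> is_boxed f) \<Phi>"
  define \<Theta> where "\<Theta> = image_mset unbox (filter_mset is_boxed \<Phi>)"
  have P: "\<Phi> = N + boxms \<Theta>" unfolding N_def \<Theta>_def by (rule split_boxes)
  have "G4iSLt ((N + \<Gamma> + {#Box \<phi>#}) + boxms \<Theta>) \<phi>" using assms(1) P by (simp add: ac_simps)
  then have p1: "G4iSLt (N + (\<Gamma> + \<Theta>) + {#Box \<phi>#}) \<phi>"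
    by (rule eq_ctx[OF unbox_ms]) (simp add: ac_simps)
  have "G4iSLt (N + boxms (\<Gamma> + \<Theta>)) (Box \<phi>)"
    apply (rule G4iSLt.SLtR)
    apply (simp add: N_def box_free_filter)
    by (rule p1)
  then show ?thesis using P by (simp add: ac_simps)
qed

lemma weaken: "G4iSLt S c \<Longrightarrow> G4iSLt (add_mset x S) c"
proof (induction arbitrary: x rule: G4iSLt.induct)
  case (BotL \<Gamma> \<chi>) then show ?case by (metis G4iSLt.BotL add_mset_commute)
next
  case (IdP p \<Gamma>) then show ?case by (metis G4iSLt.IdP add_mset_commute)
next
  case (AndL \<phi> \<psi> \<Gamma> \<chi>)
  have "G4iSLt (add_mset \<phi> (add_mset \<psi> (add_mset x \<Gamma>))) \<chi>" using AndL.IH[of x] by (simp add: add_mset_commute)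
  then show ?case by (rule eq_ctx[OF G4iSLt.AndL]) (simp add: add_mset_commute)
next
  case (AndR \<Gamma> \<phi> \<psi>) then show ?case by (simp add: G4iSLt.AndR)
next
  case (OrL \<phi> \<Gamma> \<chi> \<psi>)
  have "G4iSLt (add_mset \<phi> (add_mset x \<Gamma>)) \<chi>" using OrL.IH(1)[of x] by (simp add: add_mset_commute)
  moreover have "G4iSLt (add_mset \<psi> (add_mset x \<Gamma>)) \<chi>" using OrL.IH(2)[of x] by (simp add: add_mset_commute)
  ultimately show ?case by (rule eq_ctx[OF G4iSLt.OrL]) (simp add: add_mset_commute)
next
  case (OrR1 \<Gamma> \<phi> \<psi>) then show ?case by (simp add: G4iSLt.OrR1)
next
  case (OrR2 \<Gamma> \<psi> \<phi>) then show ?case by (simp add: G4iSLt.OrR2)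
next
  case (PImpL p \<phi> \<Gamma> \<chi>)
  have "G4iSLt (add_mset (Var p) (add_mset \<phi> (add_mset x \<Gamma>))) \<chi>" using PImpL.IH[of x] by (simp add: add_mset_commute)
  then show ?case by (rule eq_ctx[OF G4iSLt.PImpL]) (simp add: add_mset_commute)
next
  case (ImpR \<phi> \<Gamma> \<psi>)
  have "G4iSLt (add_mset \<phi> (add_mset x \<Gamma>)) \<psi>" using ImpR.IH[of x] by (simp add: add_mset_commute)
  then show ?case by (rule G4iSLt.ImpR)
next
  case (BoxImpL \<Phi> \<Gamma> \<psi> \<phi> \<chi>)
  have "G4iSLt (add_mset x \<Phi> + boxms \<Gamma> + {#Imp (Box \<phi>) \<psi>#}) \<chi>"
    apply (rule BoxImpL')
    using BoxImpL.IH(1)[of x] apply (simp add: add_mset_commute)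
    using BoxImpL.IH(2)[of x] by (simp add: add_mset_commute)
  then show ?case by (simp add: add_mset_commute)
next
  case (SLtR \<Phi> \<Gamma> \<phi>)
  have "G4iSLt (add_mset x \<Phi> + boxms \<Gamma>) (Box \<phi>)"
    apply (rule SLtR')
    using SLtR.IH[of x] by (simp add: add_mset_commute)
  then show ?case by (simp add: add_mset_commute)
next
  case (AndImpL \<phi> \<psi> \<chi> \<Gamma> \<delta>)
  have "G4iSLt (add_mset (Imp \<phi> (Imp \<psi> \<chi>)) (add_mset x \<Gamma>)) \<delta>" using AndImpL.IH[of x] by (simp add: add_mset_commute)
  then show ?case by (rule eq_ctx[OF G4iSLt.AndImpL]) (simp add: add_mset_commute)
next
  case (OrImpL \<phi> \<chi> \<psi> \<Gamma> \<delta>)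
  have "G4iSLt (add_mset (Imp \<phi> \<chi>) (add_mset (Imp \<psi> \<chi>) (add_mset x \<Gamma>))) \<delta>" using OrImpL.IH[of x] by (simp add: add_mset_commute)
  then show ?case by (rule eq_ctx[OF G4iSLt.OrImpL]) (simp add: add_mset_commute)
next
  case (ImpImpL \<psi> \<chi> \<Gamma> \<phi> \<delta>)
  have "G4iSLt (add_mset (Imp \<psi> \<chi>) (add_mset x \<Gamma>)) (Imp \<phi> \<psi>)" using ImpImpL.IH(1)[of x] by (simp add: add_mset_commute)
  moreover have "G4iSLt (add_mset \<chi> (add_mset x \<Gamma>)) \<delta>" using ImpImpL.IH(2)[of x] by (simp add: add_mset_commute)
  ultimately show ?case by (rule eq_ctx[OF G4iSLt.ImpImpL]) (simp add: add_mset_commute)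
qed

lemma replace:
  assumes "G4iSLt S c" "S = add_mset X T"
  and nb: "\<not> is_boxed X" and nv: "\<forall>p. X \<noteq> Var p" and nbot: "X \<noteq> Bot"
  and cAndL: "\<And>\<phi> \<psi> T c. X = And \<phi> \<psi> \<Longrightarrow> G4iSLt (add_mset \<phi> (add_mset \<psi> T)) c \<Longrightarrow> G4iSLt (T + N) c"
  and cOrL: "\<And>\<phi> \<psi> T c. X = Or \<phi> \<psi> \<Longrightarrow> G4iSLt (add_mset \<phi> T) c \<Longrightarrow> G4iSLt (add_mset \<psi> T) c \<Longrightarrow> G4iSLt (T + N) c"
  and cPImpL: "\<And>p \<phi> T c. X = Imp (Var p) \<phi> \<Longrightarrow> G4iSLt (add_mset (Var p) (add_mset \<phi> T)) c \<Longrightarrow> G4iSLt (add_mset (Var p) T + N) c"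
  and cBoxImpL: "\<And>\<Phi> \<Gamma> \<psi> \<phi> c. X = Imp (Box \<phi>) \<psi> \<Longrightarrow> box_free \<Phi> \<Longrightarrow> G4iSLt (\<Phi> + \<Gamma> + {#\<psi>, Box \<phi>#}) \<phi> \<Longrightarrow>
      G4iSLt (\<Phi> + boxms \<Gamma> + {#\<psi>#}) c \<Longrightarrow> G4iSLt (\<Phi> + boxms \<Gamma> + N) c"
  and cAndImpL: "\<And>\<phi> \<psi> \<chi> T c. X = Imp (And \<phi> \<psi>) \<chi> \<Longrightarrow> G4iSLt (add_mset (Imp \<phi> (Imp \<psi> \<chi>)) T) c \<Longrightarrow> G4iSLt (T + N) c"
  and cOrImpL: "\<And>\<phi> \<psi> \<chi> T c. X = Imp (Or \<phi> \<psi>) \<chi> \<Longrightarrow> G4iSLt (add_mset (Imp \<phi> \<chi>) (add_mset (Imp \<psi> \<chi>) T)) c \<Longrightarrow> G4iSLt (T + N) c"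
  and cImpImpL: "\<And>\<phi> \<psi> \<chi> T c. X = Imp (Imp \<phi> \<psi>) \<chi> \<Longrightarrow> G4iSLt (add_mset (Imp \<psi> \<chi>) T) (Imp \<phi> \<psi>) \<Longrightarrow>
      G4iSLt (add_mset \<chi> T) c \<Longrightarrow> G4iSLt (T + N) c"
  shows "G4iSLt (T + N) c"
  using assms(1,2)
proof (induction arbitrary: T rule: G4iSLt.induct)
  case (BotL \<Gamma> \<chi>)
  then obtain K where "T = add_mset Bot K" using split_ne[of Bot \<Gamma> X T] nbot by auto
  then show ?case by (simp add: G4iSLt.BotL)
next
  case (IdP p \<Gamma>)
  then obtain K where "T = add_mset (Var p) K" using split_ne[of "Var p" \<Gamma> X T] nv by auto
  then show ?case by (simp add: G4iSLt.IdP)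
next
  case (AndL \<phi> \<psi> \<Gamma> \<chi>)
  show ?case
  proof (cases "X = And \<phi> \<psi>")
    case True
    then have "\<Gamma> = T" using AndL.prems by simp
    then show ?thesis using cAndL[OF True] AndL.hyps by simp
  next
    case False
    then obtain K where K: "\<Gamma> = add_mset X K" "T = add_mset (And \<phi> \<psi>) K"
      using split_ne[of "And \<phi> \<psi>" \<Gamma> X T] AndL.prems by auto
    have "G4iSLt (add_mset \<phi> (add_mset \<psi> (K + N))) \<chi>"
      using AndL.IH[of "add_mset \<phi> (add_mset \<psi> K)"] K by (simp add: add_mset_commute)
    then show ?thesis by (rule eq_ctx[OF G4iSLt.AndL]) (simp add: K add_mset_commute)
  qed
next
  case (AndR \<Gamma> \<phi> \<psi>) then show ?case by (simp add: G4iSLt.AndR)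
next
  case (OrL \<phi> \<Gamma> \<chi> \<psi>)
  show ?case
  proof (cases "X = Or \<phi> \<psi>")
    case True
    then have "\<Gamma> = T" using OrL.prems by simp
    then show ?thesis using cOrL[OF True] OrL.hyps by simp
  next
    case False
    then obtain K where K: "\<Gamma> = add_mset X K" "T = add_mset (Or \<phi> \<psi>) K"
      using split_ne[of "Or \<phi> \<psi>" \<Gamma> X T] OrL.prems by auto
    have "G4iSLt (add_mset \<phi> (K + N)) \<chi>"
      using OrL.IH(1)[of "add_mset \<phi> K"] K by (simp add: add_mset_commute)
    moreover have "G4iSLt (add_mset \<psi> (K + N)) \<chi>"
      using OrL.IH(2)[of "add_mset \<psi> K"] K by (simp add: add_mset_commute)
    ultimately show ?thesis by (rule eq_ctx[OF G4iSLt.OrL]) (simp add: K add_mset_commute)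
  qed
next
  case (OrR1 \<Gamma> \<phi> \<psi>) then show ?case by (simp add: G4iSLt.OrR1)
next
  case (OrR2 \<Gamma> \<psi> \<phi>) then show ?case by (simp add: G4iSLt.OrR2)
next
  case (PImpL p \<phi> \<Gamma> \<chi>)
  obtain T0 where T0: "add_mset (Imp (Var p) \<phi>) \<Gamma> = add_mset X T0" "T = add_mset (Var p) T0"
    using split_ne[of "Var p" "add_mset (Imp (Var p) \<phi>) \<Gamma>" X T] PImpL.prems nv by auto
  show ?case
  proof (cases "X = Imp (Var p) \<phi>")
    case True
    then have "\<Gamma> = T0" using T0 by simp
    then show ?thesis using cPImpL[OF True] PImpL.hyps T0 by simp
  next
    case False
    then obtain K where K: "\<Gamma> = add_mset X K" "T0 = add_mset (Imp (Var p) \<phi>) K"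
      using split_ne[of "Imp (Var p) \<phi>" \<Gamma> X T0] T0 by auto
    have "G4iSLt (add_mset (Var p) (add_mset \<phi> (K + N))) \<chi>"
      using PImpL.IH[of "add_mset (Var p) (add_mset \<phi> K)"] K by (simp add: add_mset_commute)
    then show ?thesis by (rule eq_ctx[OF G4iSLt.PImpL]) (simp add: K T0 add_mset_commute)
  qed
next
  case (ImpR \<phi> \<Gamma> \<psi>)
  have "G4iSLt (add_mset \<phi> (T + N)) \<psi>"
    using ImpR.IH[of "add_mset \<phi> T"] ImpR.prems by (simp add: add_mset_commute)
  then show ?case by (rule G4iSLt.ImpR)
next
  case (BoxImpL \<Phi> \<Gamma> \<psi> \<phi> \<chi>)
  from box_ctx_cases[OF BoxImpL.prems] nb
  consider (A) \<Phi>' where "\<Phi> = add_mset X \<Phi>'" "T = \<Phi>' + boxms \<Gamma> + {#Imp (Box \<phi>) \<psi>#}"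
    | (C) "X = Imp (Box \<phi>) \<psi>" "T = \<Phi> + boxms \<Gamma>"
    by (auto simp: is_boxed_def)
  then show ?case
  proof cases
    case A
    have p1: "G4iSLt (\<Phi>' + \<Gamma> + {#\<psi>, Box \<phi>#} + N) \<phi>"
      using BoxImpL.IH(1)[of "\<Phi>' + \<Gamma> + {#\<psi>, Box \<phi>#}"] A by simp
    have p2: "G4iSLt (\<Phi>' + boxms \<Gamma> + {#\<psi>#} + N) \<chi>"
      using BoxImpL.IH(2)[of "\<Phi>' + boxms \<Gamma> + {#\<psi>#}"] A by simp
    have "G4iSLt ((\<Phi>' + N) + boxms \<Gamma> + {#Imp (Box \<phi>) \<psi>#}) \<chi>"
      apply (rule BoxImpL')
      using p1 apply (simp add: ac_simps)
      using p2 by (simp add: ac_simps)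
    then show ?thesis using A by (simp add: ac_simps)
  next
    case C
    then show ?thesis using cBoxImpL[OF C(1) BoxImpL.hyps(1,2,3)] by simp
  qed
next
  case (SLtR \<Phi> \<Gamma> \<phi>)
  from box_ctx_cases[of \<Phi> \<Gamma> "{#}" X T] SLtR.prems nb
  obtain \<Phi>' where A: "\<Phi> = add_mset X \<Phi>'" "T = \<Phi>' + boxms \<Gamma>"
    by (auto simp: is_boxed_def)
  have p1: "G4iSLt (\<Phi>' + \<Gamma> + {#Box \<phi>#} + N) \<phi>"
    using SLtR.IH[of "\<Phi>' + \<Gamma> + {#Box \<phi>#}"] A by simp
  have "G4iSLt ((\<Phi>' + N) + boxms \<Gamma>) (Box \<phi>)"
    apply (rule SLtR')
    using p1 by (simp add: ac_simps)
  then show ?case using A by (simp add: ac_simps)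
next
  case (AndImpL \<phi> \<psi> \<chi> \<Gamma> \<delta>)
  show ?case
  proof (cases "X = Imp (And \<phi> \<psi>) \<chi>")
    case True
    then have "\<Gamma> = T" using AndImpL.prems by simp
    then show ?thesis using cAndImpL[OF True] AndImpL.hyps by simp
  next
    case False
    then obtain K where K: "\<Gamma> = add_mset X K" "T = add_mset (Imp (And \<phi> \<psi>) \<chi>) K"
      using split_ne[of "Imp (And \<phi> \<psi>) \<chi>" \<Gamma> X T] AndImpL.prems by auto
    have "G4iSLt (add_mset (Imp \<phi> (Imp \<psi> \<chi>)) (K + N)) \<delta>"
      using AndImpL.IH[of "add_mset (Imp \<phi> (Imp \<psi> \<chi>)) K"] K by (simp add: add_mset_commute)
    then show ?thesis by (rule eq_ctx[OF G4iSLt.AndImpL]) (simp add: K add_mset_commute)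
  qed
next
  case (OrImpL \<phi> \<chi> \<psi> \<Gamma> \<delta>)
  show ?case
  proof (cases "X = Imp (Or \<phi> \<psi>) \<chi>")
    case True
    then have "\<Gamma> = T" using OrImpL.prems by simp
    then show ?thesis using cOrImpL[OF True] OrImpL.hyps by simp
  next
    case False
    then obtain K where K: "\<Gamma> = add_mset X K" "T = add_mset (Imp (Or \<phi> \<psi>) \<chi>) K"
      using split_ne[of "Imp (Or \<phi> \<psi>) \<chi>" \<Gamma> X T] OrImpL.prems by auto
    have "G4iSLt (add_mset (Imp \<phi> \<chi>) (add_mset (Imp \<psi> \<chi>) (K + N))) \<delta>"
      using OrImpL.IH[of "add_mset (Imp \<phi> \<chi>) (add_mset (Imp \<psi> \<chi>) K)"] K by (simp add: add_mset_commute)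
    then show ?thesis by (rule eq_ctx[OF G4iSLt.OrImpL]) (simp add: K add_mset_commute)
  qed
next
  case (ImpImpL \<psi> \<chi> \<Gamma> \<phi> \<delta>)
  show ?case
  proof (cases "X = Imp (Imp \<phi> \<psi>) \<chi>")
    case True
    then have "\<Gamma> = T" using ImpImpL.prems by simp
    then show ?thesis using cImpImpL[OF True] ImpImpL.hyps by simp
  next
    case False
    then obtain K where K: "\<Gamma> = add_mset X K" "T = add_mset (Imp (Imp \<phi> \<psi>) \<chi>) K"
      using split_ne[of "Imp (Imp \<phi> \<psi>) \<chi>" \<Gamma> X T] ImpImpL.prems by auto
    have "G4iSLt (add_mset (Imp \<psi> \<chi>) (K + N)) (Imp \<phi> \<psi>)"
      using ImpImpL.IH(1)[of "add_mset (Imp \<psi> \<chi>) K"] K by (simp add: add_mset_commute)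
    moreover have "G4iSLt (add_mset \<chi> (K + N)) \<delta>"
      using ImpImpL.IH(2)[of "add_mset \<chi> K"] K by (simp add: add_mset_commute)
    ultimately show ?thesis by (rule eq_ctx[OF G4iSLt.ImpImpL]) (simp add: K add_mset_commute)
  qed
qed

lemma inv_AndL: assumes "G4iSLt (add_mset (And a b) T) c" shows "G4iSLt (T + {#a, b#}) c"
  by (rule replace[OF assms refl]) (auto simp: is_boxed_def add_mset_commute)

lemma inv_OrL1: assumes "G4iSLt (add_mset (Or a b) T) c" shows "G4iSLt (T + {#a#}) c"
  by (rule replace[OF assms refl]) (auto simp: is_boxed_def add_mset_commute)

lemma inv_OrL2: assumes "G4iSLt (add_mset (Or a b) T) c" shows "G4iSLt (T + {#b#}) c"
  by (rule replace[OF assms refl]) (auto simp: is_boxed_def add_mset_commute)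

lemma inv_AndImpL: assumes "G4iSLt (add_mset (Imp (And a b) d) T) c" shows "G4iSLt (T + {#Imp a (Imp b d)#}) c"
  by (rule replace[OF assms refl]) (auto simp: is_boxed_def add_mset_commute)

lemma inv_OrImpL: assumes "G4iSLt (add_mset (Imp (Or a b) d) T) c" shows "G4iSLt (T + {#Imp a d, Imp b d#}) c"
  by (rule replace[OF assms refl]) (auto simp: is_boxed_def add_mset_commute)

lemma impweak: assumes "G4iSLt (add_mset (Imp y d) T) c" "\<forall>a b. y \<noteq> And a b" "\<forall>a b. y \<noteq> Or a b"
  shows "G4iSLt (T + {#d#}) c"
  by (rule replace[OF assms(1) refl]) (use assms(2,3) in \<open>auto simp: is_boxed_def add_mset_commute\<close>)

lemma inv_ImpR: "G4iSLt S c \<Longrightarrow> c = Imp a b \<Longrightarrow> G4iSLt (add_mset a S) b"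
proof (induction arbitrary: a b rule: G4iSLt.induct)
  case (BotL \<Gamma> \<chi>) then show ?case by (metis G4iSLt.BotL add_mset_commute)
next
  case (AndL \<phi> \<psi> \<Gamma> \<chi>)
  have "G4iSLt (add_mset \<phi> (add_mset \<psi> (add_mset a \<Gamma>))) b" using AndL by (simp add: add_mset_commute)
  then show ?case by (rule eq_ctx[OF G4iSLt.AndL]) (simp add: add_mset_commute)
next
  case (OrL \<phi> \<Gamma> \<chi> \<psi>)
  have "G4iSLt (add_mset \<phi> (add_mset a \<Gamma>)) b" using OrL by (simp add: add_mset_commute)
  moreover have "G4iSLt (add_mset \<psi> (add_mset a \<Gamma>)) b" using OrL by (simp add: add_mset_commute)
  ultimately show ?case by (rule eq_ctx[OF G4iSLt.OrL]) (simp add: add_mset_commute)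
next
  case (PImpL p \<phi> \<Gamma> \<chi>)
  have "G4iSLt (add_mset (Var p) (add_mset \<phi> (add_mset a \<Gamma>))) b" using PImpL by (simp add: add_mset_commute)
  then show ?case by (rule eq_ctx[OF G4iSLt.PImpL]) (simp add: add_mset_commute)
next
  case (ImpR \<phi> \<Gamma> \<psi>) then show ?case by (simp add: add_mset_commute)
next
  case (BoxImpL \<Phi> \<Gamma> \<psi> \<phi> \<chi>)
  have "G4iSLt (add_mset a \<Phi> + boxms \<Gamma> + {#Imp (Box \<phi>) \<psi>#}) b"
    apply (rule BoxImpL')
    using weaken[OF BoxImpL.hyps(2), of a] apply (simp add: add_mset_commute)
    using BoxImpL.IH(2)[of a b] BoxImpL.prems by (simp add: add_mset_commute)
  then show ?case by (simp add: add_mset_commute)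
next
  case (AndImpL \<phi> \<psi> \<chi> \<Gamma> \<delta>)
  have "G4iSLt (add_mset (Imp \<phi> (Imp \<psi> \<chi>)) (add_mset a \<Gamma>)) b" using AndImpL by (simp add: add_mset_commute)
  then show ?case by (rule eq_ctx[OF G4iSLt.AndImpL]) (simp add: add_mset_commute)
next
  case (OrImpL \<phi> \<chi> \<psi> \<Gamma> \<delta>)
  have "G4iSLt (add_mset (Imp \<phi> \<chi>) (add_mset (Imp \<psi> \<chi>) (add_mset a \<Gamma>))) b" using OrImpL by (simp add: add_mset_commute)
  then show ?case by (rule eq_ctx[OF G4iSLt.OrImpL]) (simp add: add_mset_commute)
next
  case (ImpImpL \<psi> \<chi> \<Gamma> \<phi> \<delta>)
  have "G4iSLt (add_mset (Imp \<psi> \<chi>) (add_mset a \<Gamma>)) (Imp \<phi> \<psi>)"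
    using weaken[OF ImpImpL.hyps(1), of a] by (simp add: add_mset_commute)
  moreover have "G4iSLt (add_mset \<chi> (add_mset a \<Gamma>)) b" using ImpImpL by (simp add: add_mset_commute)
  ultimately show ?case by (rule eq_ctx[OF G4iSLt.ImpImpL]) (simp add: add_mset_commute)
qed auto

lemma impL_adm:
  "G4iSLt S \<psi> \<Longrightarrow> G4iSLt (add_mset d S) e \<Longrightarrow> G4iSLt (add_mset (Imp \<psi> d) S) e"
proof (induction arbitrary: d e rule: G4iSLt.induct)
  case (BotL \<Gamma> \<chi>) then show ?case by (metis G4iSLt.BotL add_mset_commute)
next
  case (IdP p \<Gamma>)
  have "G4iSLt (add_mset (Var p) (add_mset d \<Gamma>)) e" using IdP by (simp add: add_mset_commute)
  then show ?case by (rule eq_ctx[OF G4iSLt.PImpL]) (simp add: add_mset_commute)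
next
  case (AndL \<phi> \<psi> \<Gamma> \<chi>)
  have "G4iSLt (add_mset (And \<phi> \<psi>) (add_mset d \<Gamma>)) e" using AndL.prems by (simp add: add_mset_commute)
  from inv_AndL[OF this] have "G4iSLt (add_mset d (add_mset \<phi> (add_mset \<psi> \<Gamma>))) e" by (simp add: add_mset_commute)
  from AndL.IH[OF this] have "G4iSLt (add_mset \<phi> (add_mset \<psi> (add_mset (Imp \<chi> d) \<Gamma>))) e" by (simp add: add_mset_commute)
  then show ?case by (rule eq_ctx[OF G4iSLt.AndL]) (simp add: add_mset_commute)
next
  case (AndR \<Gamma> \<phi> \<psi>)
  have "G4iSLt (add_mset (Imp \<psi> d) \<Gamma>) e" using AndR.IH(2)[OF AndR.prems] .
  from AndR.IH(1)[OF this] show ?case by (rule G4iSLt.AndImpL)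
next
  case (OrL \<phi> \<Gamma> \<chi> \<psi>)
  have G: "G4iSLt (add_mset (Or \<phi> \<psi>) (add_mset d \<Gamma>)) e" using OrL.prems by (simp add: add_mset_commute)
  from inv_OrL1[OF G] have "G4iSLt (add_mset d (add_mset \<phi> \<Gamma>)) e" by (simp add: add_mset_commute)
  from OrL.IH(1)[OF this] have "G4iSLt (add_mset \<phi> (add_mset (Imp \<chi> d) \<Gamma>)) e" by (simp add: add_mset_commute)
  moreover from inv_OrL2[OF G] have "G4iSLt (add_mset d (add_mset \<psi> \<Gamma>)) e" by (simp add: add_mset_commute)
  from OrL.IH(2)[OF this] have "G4iSLt (add_mset \<psi> (add_mset (Imp \<chi> d) \<Gamma>)) e" by (simp add: add_mset_commute)
  ultimately show ?case by (rule eq_ctx[OF G4iSLt.OrL]) (simp add: add_mset_commute)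
next
  case (OrR1 \<Gamma> \<phi> \<psi>)
  have "G4iSLt (add_mset (Imp \<phi> d) \<Gamma>) e" using OrR1.IH[OF OrR1.prems] .
  from weaken[OF this, of "Imp \<psi> d"] have "G4iSLt (add_mset (Imp \<phi> d) (add_mset (Imp \<psi> d) \<Gamma>)) e"
    by (simp add: add_mset_commute)
  then show ?case by (rule G4iSLt.OrImpL)
next
  case (OrR2 \<Gamma> \<psi> \<phi>)
  have "G4iSLt (add_mset (Imp \<psi> d) \<Gamma>) e" using OrR2.IH[OF OrR2.prems] .
  from weaken[OF this, of "Imp \<phi> d"] have "G4iSLt (add_mset (Imp \<phi> d) (add_mset (Imp \<psi> d) \<Gamma>)) e"
    by (simp add: add_mset_commute)
  then show ?case by (rule G4iSLt.OrImpL)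
next
  case (PImpL p \<phi> \<Gamma> \<chi>)
  have "G4iSLt (add_mset (Imp (Var p) \<phi>) (add_mset d (add_mset (Var p) \<Gamma>))) e" using PImpL.prems by (simp add: add_mset_commute)
  from impweak[OF this] have "G4iSLt (add_mset d (add_mset (Var p) (add_mset \<phi> \<Gamma>))) e" by (simp add: add_mset_commute)
  from PImpL.IH[OF this] have "G4iSLt (add_mset (Var p) (add_mset \<phi> (add_mset (Imp \<chi> d) \<Gamma>))) e" by (simp add: add_mset_commute)
  then show ?case by (rule eq_ctx[OF G4iSLt.PImpL]) (simp add: add_mset_commute)
next
  case (ImpR \<phi> \<Gamma> \<psi>)
  have "G4iSLt (add_mset \<phi> (add_mset (Imp \<psi> d) \<Gamma>)) \<psi>" using weaken[OF ImpR.hyps, of "Imp \<psi> d"] by (simp add: add_mset_commute)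
  then have "G4iSLt (add_mset (Imp \<psi> d) \<Gamma>) (Imp \<phi> \<psi>)" by (rule G4iSLt.ImpR)
  then show ?case using ImpR.prems by (rule G4iSLt.ImpImpL)
next
  case (BoxImpL \<Phi> \<Gamma> \<psi> \<phi> \<chi>)
  have "G4iSLt (add_mset (Imp (Box \<phi>) \<psi>) (add_mset d (\<Phi> + boxms \<Gamma>))) e" using BoxImpL.prems by (simp add: add_mset_commute)
  from impweak[OF this] have "G4iSLt (add_mset d (\<Phi> + boxms \<Gamma> + {#\<psi>#})) e" by (simp add: add_mset_commute)
  from BoxImpL.IH(2)[OF this] have p2: "G4iSLt (add_mset (Imp \<chi> d) (\<Phi> + boxms \<Gamma> + {#\<psi>#})) e" .
  have "G4iSLt (add_mset (Imp \<chi> d) \<Phi> + boxms \<Gamma> + {#Imp (Box \<phi>) \<psi>#}) e"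
    apply (rule BoxImpL')
    using weaken[OF BoxImpL.hyps(2), of "Imp \<chi> d"] apply (simp add: add_mset_commute)
    using p2 by (simp add: add_mset_commute)
  then show ?case by (simp add: add_mset_commute)
next
  case (SLtR \<Phi> \<Gamma> \<phi>)
  have "G4iSLt (\<Phi> + boxms \<Gamma> + {#Imp (Box \<phi>) d#}) e"
    apply (rule BoxImpL')
    using weaken[OF SLtR.hyps(2), of d] apply (simp add: add_mset_commute)
    using SLtR.prems by (simp add: add_mset_commute)
  then show ?case by (simp add: add_mset_commute)
next
  case (AndImpL \<phi> \<psi> \<chi> \<Gamma> \<delta>)
  have "G4iSLt (add_mset (Imp (And \<phi> \<psi>) \<chi>) (add_mset d \<Gamma>)) e" using AndImpL.prems by (simp add: add_mset_commute)
  from inv_AndImpL[OF this] have "G4iSLt (add_mset d (add_mset (Imp \<phi> (Imp \<psi> \<chi>)) \<Gamma>)) e" by (simp add: add_mset_commute)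
  from AndImpL.IH[OF this] have "G4iSLt (add_mset (Imp \<phi> (Imp \<psi> \<chi>)) (add_mset (Imp \<delta> d) \<Gamma>)) e" by (simp add: add_mset_commute)
  then show ?case by (rule eq_ctx[OF G4iSLt.AndImpL]) (simp add: add_mset_commute)
next
  case (OrImpL \<phi> \<chi> \<psi> \<Gamma> \<delta>)
  have "G4iSLt (add_mset (Imp (Or \<phi> \<psi>) \<chi>) (add_mset d \<Gamma>)) e" using OrImpL.prems by (simp add: add_mset_commute)
  from inv_OrImpL[OF this] have "G4iSLt (add_mset d (add_mset (Imp \<phi> \<chi>) (add_mset (Imp \<psi> \<chi>) \<Gamma>))) e" by (simp add: add_mset_commute)
  from OrImpL.IH[OF this] have "G4iSLt (add_mset (Imp \<phi> \<chi>) (add_mset (Imp \<psi> \<chi>) (add_mset (Imp \<delta> d) \<Gamma>))) e" by (simp add: add_mset_commute)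
  then show ?case by (rule eq_ctx[OF G4iSLt.OrImpL]) (simp add: add_mset_commute)
next
  case (ImpImpL \<psi> \<chi> \<Gamma> \<phi> \<delta>)
  have "G4iSLt (add_mset (Imp (Imp \<phi> \<psi>) \<chi>) (add_mset d \<Gamma>)) e" using ImpImpL.prems by (simp add: add_mset_commute)
  from impweak[OF this] have "G4iSLt (add_mset d (add_mset \<chi> \<Gamma>)) e" by (simp add: add_mset_commute)
  from ImpImpL.IH(2)[OF this] have q2: "G4iSLt (add_mset \<chi> (add_mset (Imp \<delta> d) \<Gamma>)) e" by (simp add: add_mset_commute)
  have q1: "G4iSLt (add_mset (Imp \<psi> \<chi>) (add_mset (Imp \<delta> d) \<Gamma>)) (Imp \<phi> \<psi>)"
    using weaken[OF ImpImpL.hyps(1), of "Imp \<delta> d"] by (simp add: add_mset_commute)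
  from q1 q2 show ?case by (rule eq_ctx[OF G4iSLt.ImpImpL]) (simp add: add_mset_commute)
qed

lemma main_principal:
  assumes P1: "G4iSLt (add_mset (Imp b c) T) (Imp a b)" and P2: "G4iSLt (add_mset c T) e"
  shows "G4iSLt (T + {#a, Imp b c, Imp b c#}) e"
proof -
  have A: "G4iSLt (add_mset a (add_mset (Imp b c) T)) b" using inv_ImpR[OF P1 refl] .
  have B: "G4iSLt (add_mset c (add_mset a (add_mset (Imp b c) T))) e"
    using weaken[OF weaken[OF P2, of "Imp b c"], of a] by (simp add: add_mset_commute)
  from impL_adm[OF A B] show ?thesis by (simp add: add_mset_commute)
qed

theorem mainTheorem12:
  fixes \<Gamma> :: "form multiset" and \<phi> \<psi> \<delta> \<chi> :: form
  assumes "G4iSLt (add_mset (Imp (Imp \<phi> \<psi>) \<delta>) \<Gamma>) \<chi>"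
  shows "G4iSLt (\<Gamma> + {#\<phi>, Imp \<psi> \<delta>, Imp \<psi> \<delta>#}) \<chi>"
  by (rule replace[OF assms refl]) (auto simp: is_boxed_def dest: main_principal)

end
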